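(* Let $f\in C[0,1]$ satisfy $f(x)\neq0$ for all $x\in[0,1]$, and let $\alpha=\overline{\dim}_B G(f)$. Then for every $\beta\in[1,\alpha)$ there exist $g,h\in C[0,1]$ such that $$f=g\cdot h,\qquad \overline{\dim}_B G(g)=\alpha,\qquad \overline{\dim}_B G(h)=\beta.$$
   Context: $C[0,1]$ is the space of real-valued continuous functions on $[0,1]$; $G(h)=\{(x,h(x)):x\in[0,1]\}\subset\mathbb{R}^2$ is the graph of $h$; $g\cdot h$ is the pointwise product. For a nonempty bounded set $F$, $N_\delta(F)$ is the smallest number of sets of diameter at most $\delta$ covering $F$, and $\overline{\dim}_B F=\limsup_{\delta\to0}\frac{\log N_\delta(F)}{-\log\delta}$. *)

theory Defs
  imports "HOL-Analysis.Analysis"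
begin

definition graph01 :: "(real \<Rightarrow> real) \<Rightarrow> (real \<times> real) set" where
  "graph01 h = {(x, h x) | x. x \<in> {0..1}}"

definition cover_number :: "real \<Rightarrow> 'a::metric_space set \<Rightarrow> nat" where
  "cover_number \<delta> F = (LEAST n. \<exists>C. finite C \<and> card C = n \<and> F \<subseteq> \<Union>C \<and>
       (\<forall>S\<in>C. bounded S \<and> diameter S \<le> \<delta>))"

definition upper_box_dim :: "'a::metric_space set \<Rightarrow> ereal" where
  "upper_box_dim F = Limsup (at_right 0)
     (\<lambda>\<delta>. ereal (ln (real (cover_number \<delta> F)) / (- ln \<delta>)))"

end

theory Submission
  imports Defs
begin

lemma interval_cover_len:
  fixes C :: "real set set"
  assumes fin: "finite C" and sub: "{a..b} \<subseteq> \<Union>C"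
    and dia: "\<And>S. S \<in> C \<Longrightarrow> bounded S \<and> diameter S \<le> d" and ab: "a \<le> b" and d: "0 \<le> d"
  shows "b - a \<le> 2 * d * card C"
proof -
  define J where "J S = (if S = {} then {} else {(SOME x. x \<in> S) - d .. (SOME x. x \<in> S) + d})" for S :: "real set"
  have SJ: "S \<subseteq> J S" if "S \<in> C" for S
  proof (cases "S = {}")
    case False
    then have xin: "(SOME x. x \<in> S) \<in> S" by (meson ex_in_conv someI_ex)
    show ?thesis
    proof
      fix y assume "y \<in> S"
      then have "dist (SOME x. x \<in> S) y \<le> diameter S"
        using diameter_bounded_bound dia[OF that] xin by blast
      then have "\<bar>(SOME x. x \<in> S) - y\<bar> \<le> d" using dia[OF that] by (simp add: dist_real_def)
      then show "y \<in> J S" using False by (auto simp: J_def)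
    qed
  qed (simp)
  have cJ: "compact (J S)" for S by (auto simp: J_def)
  have mJ: "measure lborel (J S) \<le> 2 * d" for S using d by (auto simp: J_def)
  have "compact (\<Union>S\<in>C. J S)" using fin cJ by (intro compact_UN) auto
  then have fm: "(\<Union>S\<in>C. J S) \<in> fmeasurable lborel" by (rule fmeasurable_compact)
  have "b - a = measure lborel {a..b}" using ab by simp
  also have "\<dots> \<le> measure lborel (\<Union>S\<in>C. J S)"
    apply (rule measure_mono_fmeasurable[OF _ _ fm]) using sub SJ by (blast, simp)
  also have "\<dots> \<le> (\<Sum>S\<in>C. measure lborel (J S))"
    using fin cJ by (intro measure_UNION_le) (auto intro: borel_compact)
  also have "\<dots> \<le> (\<Sum>S\<in>C. 2 * d)" by (intro sum_mono mJ)
  finally show ?thesis by (simp add: mult.commute)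
qed

lemma cn_le:
  assumes "finite C" "F \<subseteq> \<Union>C" "\<And>S. S \<in> C \<Longrightarrow> bounded S \<and> diameter S \<le> \<delta>"
  shows "cover_number \<delta> F \<le> card C"
  unfolding cover_number_def using assms by (intro Least_le) blast

lemma cn_obtain:
  assumes "finite C" "F \<subseteq> \<Union>C" "\<And>S. S \<in> C \<Longrightarrow> bounded S \<and> diameter S \<le> \<delta>"
  obtains D where "finite D" "card D = cover_number \<delta> F" "F \<subseteq> \<Union>D"
     "\<And>S. S \<in> D \<Longrightarrow> bounded S \<and> diameter S \<le> \<delta>"
proof -
  have "\<exists>n. \<exists>C. finite C \<and> card C = n \<and> F \<subseteq> \<Union>C \<and> (\<forall>S\<in>C. bounded S \<and> diameter S \<le> \<delta>)"
    using assms by blast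
  from LeastI_ex[OF this] show ?thesis using that unfolding cover_number_def by blast
qed

definition ncol :: "real \<Rightarrow> nat" where "ncol w = nat \<lfloor>1/w\<rfloor> + 1"
definition col :: "real \<Rightarrow> nat \<Rightarrow> real set" where
  "col w i = {real i * w .. (real i + 1) * w} \<inter> {0..1}"
definition osum :: "(real \<Rightarrow> real) \<Rightarrow> real \<Rightarrow> real" where
  "osum u w = (\<Sum>i<ncol w. diameter (u ` col w i))"

lemma ncol_le: assumes "0 < w" shows "real (ncol w) \<le> 1/w + 1"
proof -
  have "real_of_int \<lfloor>1/w\<rfloor> \<le> 1/w" by simp
  moreover have "0 \<le> \<lfloor>1/w\<rfloor>" using assms by simp
  ultimately show ?thesis unfolding ncol_def by simp
qed

lemma col_mem: assumes "0 < w" "x \<in> {0..1}" shows "nat \<lfloor>x/w\<rfloor> < ncol w" "x \<in> col w (nat \<lfloor>x/w\<rfloor>)"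
proof -
  have "x/w \<le> 1/w" using assms by (simp add: divide_right_mono)
  then have "\<lfloor>x/w\<rfloor> \<le> \<lfloor>1/w\<rfloor>" by (rule floor_mono)
  moreover have "0 \<le> \<lfloor>x/w\<rfloor>" using assms by simp
  ultimately show "nat \<lfloor>x/w\<rfloor> < ncol w" unfolding ncol_def by linarith
  have e: "real (nat \<lfloor>x/w\<rfloor>) = real_of_int \<lfloor>x/w\<rfloor>" using \<open>0 \<le> \<lfloor>x/w\<rfloor>\<close> by simp
  have "real_of_int \<lfloor>x/w\<rfloor> * w \<le> x"
    using assms by (metis floor_divide_lower)
  moreover have "x < (real_of_int \<lfloor>x/w\<rfloor> + 1) * w"
    using assms by (metis floor_divide_upper)
  ultimately show "x \<in> col w (nat \<lfloor>x/w\<rfloor>)" using assms unfolding col_def e by auto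
qed

lemma col_left: assumes "0 < w" "i < ncol w" shows "real i * w \<in> col w i"
proof -
  have "0 \<le> \<lfloor>1/w\<rfloor>" using assms(1) by simp
  moreover have "i \<le> nat \<lfloor>1/w\<rfloor>" using assms(2) unfolding ncol_def by linarith
  ultimately have "int i \<le> \<lfloor>1/w\<rfloor>" by (simp add: le_nat_iff)
  then have "real i \<le> 1/w" by (metis floor_le_iff le_floor_iff of_int_of_nat_eq)
  then have "real i * w \<le> 1" using assms by (simp add: field_simps)
  then show ?thesis using assms unfolding col_def by auto
qed

lemma col_compact: "compact (col w i)" unfolding col_def by auto
lemma col_convex: "connected (col w i)" unfolding col_def Int_atLeastAtMost by simp

lemma col_sub: "col w i \<subseteq> {0..1}" unfolding col_def by auto

lemma bounded_img: assumes "continuous_on {0..1} u" shows "bounded (u ` col w i)"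
  by (meson assms col_compact col_sub compact_continuous_image compact_imp_bounded continuous_on_subset)

lemma diam_rect:
  assumes "0 \<le> w"
  shows "diameter ({a..a+w} \<times> {b..b+w}) \<le> 2 * w"
proof (rule diameter_le)
  show "{a..a + w} \<times> {b..b + w} \<noteq> {} \<or> 0 \<le> 2 * w" using assms by simp
  fix p q assume "p \<in> {a..a + w} \<times> {b..b + w}" "q \<in> {a..a + w} \<times> {b..b + w}"
  then obtain x1 y1 x2 y2 where pq: "p = (x1,y1)" "q = (x2,y2)" "x1 \<in> {a..a+w}" "x2 \<in> {a..a+w}"
     "y1 \<in> {b..b+w}" "y2 \<in> {b..b+w}" by auto
  have "norm (p - q) = sqrt ((x1-x2)\<^sup>2 + (y1-y2)\<^sup>2)" using pq by (simp add: norm_Pair)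
  also have "\<dots> \<le> \<bar>x1-x2\<bar> + \<bar>y1-y2\<bar>" by (rule sqrt_sum_squares_le_sum_abs)
  also have "\<dots> \<le> 2*w" using pq by auto
  finally show "norm (p - q) \<le> 2 * w" .
qed

lemma upper_cover:
  assumes u: "continuous_on {0..1} u" and w: "0 < w"
  shows "real (cover_number (2*w) (graph01 u)) \<le> 2 * osum u w / w + 2 * ncol w"
    and "\<exists>C. finite C \<and> graph01 u \<subseteq> \<Union>C \<and> (\<forall>S\<in>C. bounded S \<and> diameter S \<le> 2*w)"
proof -
  define D where "D i = diameter (u ` col w i)" for i
  define lo where "lo i = u (real i * w) - D i" for i
  define k where "k i = nat \<lceil>2 * D i / w\<rceil> + 1" for i
  define R where "R ij = {real (fst ij) * w .. real (fst ij) * w + w} \<times>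
        {lo (fst ij) + real (snd ij) * w .. lo (fst ij) + real (snd ij) * w + w}" for ij
  define I where "I = (SIGMA i:{..<ncol w}. {..<k i})"
  define C where "C = R ` I"
  have finI: "finite I" unfolding I_def by auto
  have finC: "finite C" unfolding C_def using finI by auto
  have Cprop: "\<forall>S\<in>C. bounded S \<and> diameter S \<le> 2*w"
    unfolding C_def R_def using diam_rect w by (auto intro!: bounded_Times)
  have D0: "0 \<le> D i" for i unfolding D_def by (rule diameter_ge_0[OF bounded_img[OF u]])
  have cov: "graph01 u \<subseteq> \<Union>C"
  proof
    fix p assume "p \<in> graph01 u"
    then obtain x where x: "p = (x, u x)" "x \<in> {0..1}" unfolding graph01_def by auto
    define i where "i = nat \<lfloor>x/w\<rfloor>"
    have i: "i < ncol w" "x \<in> col w i" using col_mem[OF w x(2)] i_def by auto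
    have xi: "real i * w \<in> col w i" by (rule col_left[OF w i(1)])
    have "dist (u x) (u (real i * w)) \<le> D i" unfolding D_def
      by (rule diameter_bounded_bound[OF bounded_img[OF u]]) (use i xi in auto)
    then have ylo: "lo i \<le> u x" "u x \<le> lo i + 2 * D i" unfolding lo_def dist_real_def by auto
    define j where "j = nat \<lfloor>(u x - lo i)/w\<rfloor>"
    have fl0: "0 \<le> \<lfloor>(u x - lo i)/w\<rfloor>" using ylo w by simp
    have "(u x - lo i)/w \<le> 2 * D i / w" using ylo w by (simp add: divide_right_mono)
    also have "\<dots> \<le> real_of_int \<lceil>2 * D i / w\<rceil>" by simp
    finally have fl: "(u x - lo i)/w \<le> real_of_int \<lceil>2 * D i / w\<rceil>" .
    have "\<lfloor>(u x - lo i)/w\<rfloor> \<le> \<lceil>2 * D i / w\<rceil>" using floor_mono[OF fl] by simp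
    then have j: "j < k i" unfolding j_def k_def using fl0 by linarith
    have e: "real j = real_of_int \<lfloor>(u x - lo i)/w\<rfloor>" unfolding j_def using fl0 by simp
    have "real_of_int \<lfloor>(u x - lo i)/w\<rfloor> * w \<le> u x - lo i" using w by (metis floor_divide_lower)
    moreover have "u x - lo i < (real_of_int \<lfloor>(u x - lo i)/w\<rfloor> + 1) * w" using w by (metis floor_divide_upper)
    ultimately have yin: "u x \<in> {lo i + real j * w .. lo i + real j * w + w}" unfolding e by (auto simp: algebra_simps)
    have "x \<in> {real i * w .. real i * w + w}" using i(2) unfolding col_def by (auto simp: algebra_simps)
    then have "p \<in> R (i,j)" unfolding R_def x(1) using yin by auto
    moreover have "(i,j) \<in> I" unfolding I_def using i j by auto
    ultimately show "p \<in> \<Union>C" unfolding C_def by auto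
  qed
  then show "\<exists>C. finite C \<and> graph01 u \<subseteq> \<Union>C \<and> (\<forall>S\<in>C. bounded S \<and> diameter S \<le> 2*w)"
    using finC Cprop by blast
  have "cover_number (2*w) (graph01 u) \<le> card C" using cn_le finC cov Cprop by blast
  also have "card C \<le> card I" unfolding C_def using finI by (rule card_image_le)
  also have "card I = (\<Sum>i<ncol w. k i)" unfolding I_def by simp
  finally have "real (cover_number (2*w) (graph01 u)) \<le> (\<Sum>i<ncol w. real (k i))"
    by (metis of_nat_le_iff of_nat_sum)
  also have "\<dots> \<le> (\<Sum>i<ncol w. 2 * D i / w + 2)"
  proof (rule sum_mono)
    fix i
    have "0 \<le> 2 * D i / w" using D0 w by simp
    then have "real (nat \<lceil>2 * D i / w\<rceil>) \<le> 2 * D i / w + 1" by linarith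
    then show "real (k i) \<le> 2 * D i / w + 2" unfolding k_def by simp
  qed
  also have "\<dots> = 2 * osum u w / w + 2 * ncol w"
    unfolding osum_def D_def by (simp add: sum.distrib sum_divide_distrib sum_distrib_left)
  finally show "real (cover_number (2*w) (graph01 u)) \<le> 2 * osum u w / w + 2 * ncol w" .
qed

lemma diam_lip:
  fixes f :: "'a::metric_space \<Rightarrow> real"
  assumes "bounded S" "\<And>p q. dist (f p) (f q) \<le> dist p q"
  shows "bounded (f ` S) \<and> diameter (f ` S) \<le> diameter S"
proof
  obtain e where e: "\<forall>x\<in>S. \<forall>y\<in>S. dist x y \<le> e" using assms(1) bounded_two_points by blast
  have "\<forall>x\<in>f ` S. \<forall>y\<in>f ` S. dist x y \<le> e"
  proof (intro ballI)
    fix x y assume "x \<in> f ` S" "y \<in> f ` S"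
    then obtain p q where "p \<in> S" "q \<in> S" "x = f p" "y = f q" by auto
    then show "dist x y \<le> e" using assms(2)[of p q] e by (meson order_trans)
  qed
  then show "bounded (f ` S)" unfolding bounded_two_points by blast
  show "diameter (f ` S) \<le> diameter S"
  proof (rule diameter_le)
    show "f ` S \<noteq> {} \<or> 0 \<le> diameter S" using diameter_ge_0[OF assms(1)] by simp
    fix x y assume "x \<in> f ` S" "y \<in> f ` S"
    then obtain p q where "p \<in> S" "q \<in> S" "x = f p" "y = f q" by auto
    then show "norm (x - y) \<le> diameter S"
      using assms(2)[of p q] diameter_bounded_bound[OF assms(1)] by (metis dist_norm order_trans)
  qed
qed

lemma meets_card:
  assumes S: "bounded S" "diameter S \<le> 2*w" and w: "0 < w"
  shows "card {i\<in>{..<n}. \<exists>p\<in>S. fst p \<in> col w i} \<le> 6"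
proof (cases "S = {}")
  case True then show ?thesis by simp
next
  case False
  then obtain p0 where p0: "p0 \<in> S" by auto
  define a where "a = fst p0 / w - 3"
  have "{i\<in>{..<n}. \<exists>p\<in>S. fst p \<in> col w i} \<subseteq> {nat \<lceil>a\<rceil>..<nat \<lceil>a\<rceil>+6}"
  proof
    fix i assume "i \<in> {i\<in>{..<n}. \<exists>p\<in>S. fst p \<in> col w i}"
    then obtain p where p: "p \<in> S" "fst p \<in> col w i" by auto
    have "dist (fst p) (fst p0) \<le> 2*w"
      using dist_fst_le[of p p0] diameter_bounded_bound[OF S(1) p(1) p0] S(2) by linarith
    then have d: "\<bar>fst p - fst p0\<bar> \<le> 2*w" by (simp add: dist_real_def)
    have c: "real i * w \<le> fst p" "fst p \<le> (real i + 1) * w" using p(2) unfolding col_def by auto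
    have e5: "(a + 5) * w = fst p0 + 2 * w" "a * w = fst p0 - 3 * w" unfolding a_def using w by (simp_all add: field_simps)
    have "real i * w \<le> (a + 5) * w" unfolding e5 using c d by linarith
    then have r1: "real i \<le> a + 5" using w by simp
    have "a * w \<le> real i * w" unfolding e5 using c d by (simp add: algebra_simps)
    then have r2: "a \<le> real i" using w by simp
    have "\<lceil>a\<rceil> \<le> int i" using r2 by (simp add: ceiling_le_iff)
    moreover have "int i \<le> \<lceil>a\<rceil> + 5"
    proof -
      have "real_of_int (int i) \<le> real_of_int (\<lceil>a\<rceil> + 5)" using r1 le_of_int_ceiling[of a] by (simp only: of_int_add of_int_numeral of_int_of_nat_eq)
      then show ?thesis by (simp only: of_int_le_iff)
    qed
    ultimately have "nat \<lceil>a\<rceil> \<le> i \<and> i < nat \<lceil>a\<rceil> + 6" by arith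
    then show "i \<in> {nat \<lceil>a\<rceil>..<nat \<lceil>a\<rceil>+6}" by simp
  qed
  then have "card {i\<in>{..<n}. \<exists>p\<in>S. fst p \<in> col w i} \<le> card {nat \<lceil>a\<rceil>..<nat \<lceil>a\<rceil>+6}"
    by (intro card_mono) auto
  then show ?thesis by simp
qed

lemma lower_cover:
  assumes u: "continuous_on {0..1} u" and w: "0 < w" and fin: "finite C"
    and cov: "graph01 u \<subseteq> \<Union>C" and Cp: "\<And>S. S \<in> C \<Longrightarrow> bounded S \<and> diameter S \<le> 2*w"
  shows "osum u w \<le> 24 * w * card C" "1 \<le> 4 * w * card C"
proof -
  have fstb: "\<And>S. S \<in> C \<Longrightarrow> bounded (fst ` S) \<and> diameter (fst ` S) \<le> 2*w"
    using diam_lip[of _ fst] dist_fst_le Cp by (meson order_trans)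
  have sndb: "\<And>S. S \<in> C \<Longrightarrow> bounded (snd ` S) \<and> diameter (snd ` S) \<le> 2*w"
    using diam_lip[of _ snd] dist_snd_le Cp by (meson order_trans)
  have "{0..1} \<subseteq> \<Union>((\<lambda>S. fst ` S) ` C)"
  proof
    fix x :: real assume "x \<in> {0..1}"
    then have "(x, u x) \<in> \<Union>C" using cov unfolding graph01_def by auto
    then show "x \<in> \<Union>((\<lambda>S. fst ` S) ` C)" by force
  qed
  from interval_cover_len[OF _ this, of "2*w"] fin fstb w
  have "1 - 0 \<le> 2 * (2*w) * card ((\<lambda>S. fst ` S) ` C)" by auto
  also have "\<dots> \<le> 2 * (2*w) * card C" using w fin by (simp add: card_image_le)
  finally show "1 \<le> 4 * w * card C" by simp
  define Ci where "Ci i = {S\<in>C. \<exists>p\<in>S. fst p \<in> col w i}" for i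
  have coli: "diameter (u ` col w i) \<le> 4 * w * card (Ci i)" if i: "i < ncol w" for i
  proof -
    have ne: "col w i \<noteq> {}" using col_left[OF w i] by auto
    have uc: "continuous_on (col w i) u" using u col_sub continuous_on_subset by blast
    obtain x1 where x1: "x1 \<in> col w i" "\<forall>y\<in>col w i. u x1 \<le> u y"
      using continuous_attains_inf[OF col_compact ne uc] by blast
    obtain x2 where x2: "x2 \<in> col w i" "\<forall>y\<in>col w i. u y \<le> u x2"
      using continuous_attains_sup[OF col_compact ne uc] by blast
    have "diameter (u ` col w i) \<le> u x2 - u x1"
    proof (rule diameter_le)
      show "u ` col w i \<noteq> {} \<or> 0 \<le> u x2 - u x1" using ne by simp
      fix a b assume "a \<in> u ` col w i" "b \<in> u ` col w i"
      then obtain x y where "x \<in> col w i" "y \<in> col w i" "a = u x" "b = u y" by auto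
      moreover have "u x1 \<le> u x" "u x1 \<le> u y" "u x \<le> u x2" "u y \<le> u x2" using calculation x1 x2 by auto
      ultimately show "norm (a - b) \<le> u x2 - u x1" by auto
    qed
    have conn: "connected (u ` col w i)" by (rule connected_continuous_image[OF uc col_convex])
    have "{u x1..u x2} \<subseteq> \<Union>((\<lambda>S. snd ` S) ` Ci i)"
    proof
      fix y assume "y \<in> {u x1..u x2}"
      then have "y \<in> u ` col w i" using connected_contains_Icc[OF conn] x1 x2 by blast
      then obtain x where x: "x \<in> col w i" "y = u x" by auto
      then have "(x, y) \<in> graph01 u" using col_sub[of w i] unfolding graph01_def by auto
      then obtain S where "S \<in> C" "(x,y) \<in> S" using cov by auto
      then have "S \<in> Ci i" unfolding Ci_def using x by force
      then show "y \<in> \<Union>((\<lambda>S. snd ` S) ` Ci i)" using \<open>(x,y) \<in> S\<close> by force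
    qed
    from interval_cover_len[OF _ this, of "2*w"] fin sndb w x1 x2
    have "u x2 - u x1 \<le> 2 * (2*w) * card ((\<lambda>S. snd ` S) ` Ci i)" unfolding Ci_def by auto
    also have "\<dots> \<le> 2 * (2*w) * card (Ci i)" using w fin unfolding Ci_def by (simp add: card_image_le)
    finally show ?thesis using \<open>diameter (u ` col w i) \<le> u x2 - u x1\<close> by simp
  qed
  have cs: "card (Ci i) = (\<Sum>S\<in>C. if \<exists>p\<in>S. fst p \<in> col w i then 1 else 0)" for i
    unfolding Ci_def using fin by (simp add: sum.If_cases Int_def)
  have "(\<Sum>i<ncol w. card (Ci i)) = (\<Sum>S\<in>C. \<Sum>i<ncol w. if \<exists>p\<in>S. fst p \<in> col w i then 1 else 0)"
    unfolding cs by (rule sum.swap)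
  also have "\<dots> = (\<Sum>S\<in>C. card {i\<in>{..<ncol w}. \<exists>p\<in>S. fst p \<in> col w i})"
    by (simp add: sum.If_cases Int_def)
  also have "\<dots> \<le> (\<Sum>S\<in>C. 6)" by (intro sum_mono meets_card) (use Cp w in auto)
  finally have cs6: "(\<Sum>i<ncol w. card (Ci i)) \<le> 6 * card C" by simp
  have "osum u w \<le> (\<Sum>i<ncol w. 4 * w * card (Ci i))" unfolding osum_def by (intro sum_mono coli) auto
  also have "\<dots> = 4 * w * (\<Sum>i<ncol w. card (Ci i))" by (simp add: sum_distrib_left)
  also have "\<dots> \<le> 4 * w * (6 * card C)"
    by (rule mult_left_mono) (use of_nat_mono[OF cs6] w in simp_all)
  finally show "osum u w \<le> 24 * w * card C" by simp
qed

abbreviation NN :: "(real \<Rightarrow> real) \<Rightarrow> real \<Rightarrow> real" where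
  "NN u \<delta> \<equiv> real (cover_number \<delta> (graph01 u))"

lemma N_props:
  assumes u: "continuous_on {0..1} u" and w: "0 < w"
  shows "osum u w \<le> 24 * w * NN u (2*w)" "1 \<le> 4 * w * NN u (2*w)"
    "NN u (2*w) \<le> 2 * osum u w / w + 2 * ncol w"
proof -
  obtain C where C: "finite C" "graph01 u \<subseteq> \<Union>C" "\<forall>S\<in>C. bounded S \<and> diameter S \<le> 2*w"
    using upper_cover(2)[OF u w] by blast
  obtain D where D: "finite D" "card D = cover_number (2*w) (graph01 u)" "graph01 u \<subseteq> \<Union>D"
     "\<And>S. S \<in> D \<Longrightarrow> bounded S \<and> diameter S \<le> 2*w"
    using cn_obtain[OF C(1,2), of "2*w"] C(3) by blast
  show "osum u w \<le> 24 * w * NN u (2*w)" "1 \<le> 4 * w * NN u (2*w)"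
    using lower_cover[OF u w D(1,3,4)] D(2) by auto
  show "NN u (2*w) \<le> 2 * osum u w / w + 2 * ncol w" by (rule upper_cover(1)[OF u w])
qed

lemma osum_nonneg: assumes "continuous_on {0..1} u" shows "0 \<le> osum u w"
  unfolding osum_def by (intro sum_nonneg diameter_ge_0 bounded_img[OF assms])

lemma osum_comb:
  assumes u: "continuous_on {0..1} u" and v: "continuous_on {0..1} v" and t: "continuous_on {0..1} t"
    and A: "0 \<le> A" and B: "0 \<le> B"
    and pw: "\<And>x y. x \<in> {0..1} \<Longrightarrow> y \<in> {0..1} \<Longrightarrow> \<bar>u x - u y\<bar> \<le> A * \<bar>v x - v y\<bar> + B * \<bar>t x - t y\<bar>"
  shows "osum u w \<le> A * osum v w + B * osum t w"
proof -
  have "diameter (u ` col w i) \<le> A * diameter (v ` col w i) + B * diameter (t ` col w i)" for i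
  proof (rule diameter_le)
    show "u ` col w i \<noteq> {} \<or> 0 \<le> A * diameter (v ` col w i) + B * diameter (t ` col w i)"
      using A B diameter_ge_0[OF bounded_img[OF v]] diameter_ge_0[OF bounded_img[OF t]] by simp
    fix a b assume "a \<in> u ` col w i" "b \<in> u ` col w i"
    then obtain x y where xy: "x \<in> col w i" "y \<in> col w i" "a = u x" "b = u y" by auto
    have "\<bar>v x - v y\<bar> \<le> diameter (v ` col w i)"
      using diameter_bounded_bound[OF bounded_img[OF v], of "v x" w i "v y"] xy by (simp add: dist_real_def)
    moreover have "\<bar>t x - t y\<bar> \<le> diameter (t ` col w i)"
      using diameter_bounded_bound[OF bounded_img[OF t], of "t x" w i "t y"] xy by (simp add: dist_real_def)
    moreover have "\<bar>u x - u y\<bar> \<le> A * \<bar>v x - v y\<bar> + B * \<bar>t x - t y\<bar>"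
      using pw xy col_sub by blast
    ultimately have "A * \<bar>v x - v y\<bar> \<le> A * diameter (v ` col w i)" "B * \<bar>t x - t y\<bar> \<le> B * diameter (t ` col w i)"
      "\<bar>u x - u y\<bar> \<le> A * \<bar>v x - v y\<bar> + B * \<bar>t x - t y\<bar>"
      using A B by (auto intro: mult_left_mono)
    then show "norm (a - b) \<le> A * diameter (v ` col w i) + B * diameter (t ` col w i)"
      using xy by simp
  qed
  then show ?thesis unfolding osum_def
    by (simp add: sum_distrib_left sum.distrib[symmetric] sum_mono)
qed

lemma N_comb:
  assumes u: "continuous_on {0..1} u" and v: "continuous_on {0..1} v" and t: "continuous_on {0..1} t"
    and A: "0 \<le> A" and B: "0 \<le> B"
    and pw: "\<And>x y. x \<in> {0..1} \<Longrightarrow> y \<in> {0..1} \<Longrightarrow> \<bar>u x - u y\<bar> \<le> A * \<bar>v x - v y\<bar> + B * \<bar>t x - t y\<bar>"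
    and w: "0 < w" "w \<le> 1"
  shows "NN u (2*w) \<le> (48 * (A + B) + 16) * (NN v (2*w) + NN t (2*w))"
proof -
  note pu = N_props[OF u w(1)] and pv = N_props[OF v w(1)] and pt = N_props[OF t w(1)]
  have oc: "osum u w \<le> A * osum v w + B * osum t w" by (rule osum_comb[OF u v t A B pw])
  have "2 * osum u w / w \<le> 2 * (A * osum v w + B * osum t w) / w"
    using oc w by (simp add: divide_right_mono)
  also have "\<dots> = 2 * A * (osum v w / w) + 2 * B * (osum t w / w)" using w by (simp add: field_simps)
  also have "\<dots> \<le> 2 * A * (24 * NN v (2*w)) + 2 * B * (24 * NN t (2*w))"
  proof -
    have "osum v w / w \<le> 24 * NN v (2*w)" using pv(1) w by (simp add: divide_le_eq algebra_simps)
    moreover have "osum t w / w \<le> 24 * NN t (2*w)" using pt(1) w by (simp add: divide_le_eq algebra_simps)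
    ultimately show ?thesis using A B by (intro add_mono mult_left_mono) auto
  qed
  finally have a: "2 * osum u w / w \<le> 48 * A * NN v (2*w) + 48 * B * NN t (2*w)" by simp
  have "2 * real (ncol w) \<le> 2 * (1/w + 1)" using ncol_le[OF w(1)] by simp
  also have "\<dots> \<le> 4 / w" using w by (simp add: field_simps)
  also have "\<dots> \<le> 16 * NN v (2*w)" using pv(2) w by (simp add: divide_le_eq algebra_simps)
  finally have b: "2 * real (ncol w) \<le> 16 * NN v (2*w)" .
  have "NN u (2*w) \<le> 48 * A * NN v (2*w) + 48 * B * NN t (2*w) + 16 * NN v (2*w)"
    using pu(3) a b by linarith
  also have "\<dots> \<le> (48 * (A + B) + 16) * (NN v (2*w) + NN t (2*w))"
    using A B by (simp add: algebra_simps)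
  finally show ?thesis .
qed

lemma mlnat: "LIM x at_right 0. - ln (x::real) :> at_top"
  using ln_at_0 filterlim_uminus_at_bot by blast

lemma c_div_mln: "((\<lambda>x. c / (- ln (x::real))) \<longlongrightarrow> 0) (at_right 0)"
  by (rule tendsto_divide_0[OF tendsto_const filterlim_at_top_imp_at_infinity[OF mlnat]])

lemma ev01: "\<forall>\<^sub>F \<delta> in at_right (0::real). 0 < \<delta> \<and> \<delta> < 1"
  unfolding eventually_at_right_field by (intro exI[of _ 1]) auto

lemma ubd_def': "upper_box_dim (graph01 u) = Limsup (at_right 0) (\<lambda>\<delta>. ereal (ln (NN u \<delta>) / (- ln \<delta>)))"
  unfolding upper_box_dim_def ..

lemma NN_ge1:
  assumes u: "continuous_on {0..1} u" and d: "0 < \<delta>"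
  shows "1 \<le> NN u \<delta>"
proof -
  have "1 \<le> 4 * (\<delta>/2) * NN u (2*(\<delta>/2))" by (rule N_props(2)[OF u]) (use d in simp)
  then have "cover_number \<delta> (graph01 u) \<noteq> 0" using d
  proof -
    assume h: "1 \<le> 4 * (\<delta>/2) * NN u (2*(\<delta>/2))"
    show ?thesis
    proof
      assume "cover_number \<delta> (graph01 u) = 0"
      with h show False by simp
    qed
  qed
  then show ?thesis by (cases "cover_number \<delta> (graph01 u)") auto
qed

lemma dim_le_max:
  fixes u v t :: "real \<Rightarrow> real"
  assumes u: "continuous_on {0..1} u" and v: "continuous_on {0..1} v" and t: "continuous_on {0..1} t"
    and A: "0 \<le> A" and B: "0 \<le> B"
    and pw: "\<And>x y. x \<in> {0..1} \<Longrightarrow> y \<in> {0..1} \<Longrightarrow> \<bar>u x - u y\<bar> \<le> A * \<bar>v x - v y\<bar> + B * \<bar>t x - t y\<bar>"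
  shows "upper_box_dim (graph01 u) \<le> max (upper_box_dim (graph01 v)) (upper_box_dim (graph01 t))"
proof -
  define K where "K = 48 * (A + B) + 16"
  have K: "0 < K" using A B unfolding K_def by simp
  define \<rho> where "\<rho> f \<delta> = ln (NN f \<delta>) / (- ln \<delta>)" for f \<delta>
  have key: "\<rho> u \<delta> \<le> ln (2*K) / (- ln \<delta>) + max (\<rho> v \<delta>) (\<rho> t \<delta>)" if d: "0 < \<delta>" "\<delta> < 1" for \<delta>
  proof -
    have N: "NN u \<delta> \<le> K * (NN v \<delta> + NN t \<delta>)"
      using N_comb[OF u v t A B pw, of "\<delta>/2"] d unfolding K_def by simp
    have g: "1 \<le> NN u \<delta>" "1 \<le> NN v \<delta>" "1 \<le> NN t \<delta>" using NN_ge1 u v t d by auto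
    have "NN v \<delta> + NN t \<delta> \<le> 2 * max (NN v \<delta>) (NN t \<delta>)" by simp
    then have "K * (NN v \<delta> + NN t \<delta>) \<le> K * (2 * max (NN v \<delta>) (NN t \<delta>))"
      by (rule mult_left_mono) (use K in simp)
    also have "\<dots> = (2*K) * max (NN v \<delta>) (NN t \<delta>)" by simp
    finally have "NN u \<delta> \<le> (2*K) * max (NN v \<delta>) (NN t \<delta>)" using N by linarith
    then have "ln (NN u \<delta>) \<le> ln ((2*K) * max (NN v \<delta>) (NN t \<delta>))" using g by simp
    also have "\<dots> = ln (2*K) + max (ln (NN v \<delta>)) (ln (NN t \<delta>))" using g K
      by (simp add: ln_mult max_def)
    finally have X: "ln (NN u \<delta>) \<le> ln (2*K) + max (ln (NN v \<delta>)) (ln (NN t \<delta>))" .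
    have L: "0 < - ln \<delta>" using d by simp
    from X have "ln (NN u \<delta>) / (- ln \<delta>) \<le> (ln (2*K) + max (ln (NN v \<delta>)) (ln (NN t \<delta>))) / (- ln \<delta>)"
      by (rule divide_right_mono[OF _ less_imp_le[OF L]])
    also have "\<dots> = ln (2*K) / (- ln \<delta>) + max (ln (NN v \<delta>) / (- ln \<delta>)) (ln (NN t \<delta>) / (- ln \<delta>))"
      using L by (simp add: add_divide_distrib max_divide_distrib_right)
    finally show ?thesis unfolding \<rho>_def .
  qed
  show ?thesis unfolding ubd_def'
  proof (subst Limsup_le_iff, intro allI impI)
    fix y assume y: "max (Limsup (at_right 0) (\<lambda>\<delta>. ereal (ln (NN v \<delta>) / - ln \<delta>)))
               (Limsup (at_right 0) (\<lambda>\<delta>. ereal (ln (NN t \<delta>) / - ln \<delta>))) < y"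
    then obtain z where z: "max (Limsup (at_right 0) (\<lambda>\<delta>. ereal (ln (NN v \<delta>) / - ln \<delta>)))
               (Limsup (at_right 0) (\<lambda>\<delta>. ereal (ln (NN t \<delta>) / - ln \<delta>))) < z" "z < y"
      using dense[OF y] by blast
    have zi: "z \<noteq> \<infinity>" using z(2) by (metis ereal_less_PInfty less_ereal.simps(2) not_less_iff_gr_or_eq)
    have zm: "z \<noteq> -\<infinity>"
    proof
      assume "z = -\<infinity>" with z(1) show False by simp
    qed
    obtain r where r: "z = ereal r" using zi zm by (cases z) simp_all
    have zz: "Limsup (at_right 0) (\<lambda>\<delta>. ereal (ln (NN v \<delta>) / - ln \<delta>)) < z"
       "Limsup (at_right 0) (\<lambda>\<delta>. ereal (ln (NN t \<delta>) / - ln \<delta>)) < z"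
      using z(1) by (simp_all only: max_less_iff_conj)
    have ev1: "\<forall>\<^sub>F \<delta> in at_right 0. ereal (\<rho> v \<delta>) < z" unfolding \<rho>_def by (rule Limsup_lessD[OF zz(1)])
    have ev2: "\<forall>\<^sub>F \<delta> in at_right 0. ereal (\<rho> t \<delta>) < z" unfolding \<rho>_def by (rule Limsup_lessD[OF zz(2)])
    show "\<forall>\<^sub>F \<delta> in at_right 0. ereal (ln (NN u \<delta>) / - ln \<delta>) < y"
    proof (cases y)
      case (real r')
      then have rr: "r < r'" using z(2) r by simp
      have "\<forall>\<^sub>F \<delta> in at_right 0. ln (2*K) / (- ln \<delta>) < r' - r"
        using c_div_mln[of "ln (2*K)"] rr by (simp add: order_tendstoD(2))
      then show ?thesis using ev1 ev2 ev01
      proof eventually_elim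
        case (elim \<delta>)
        have a: "\<rho> v \<delta> < r" "\<rho> t \<delta> < r" using elim(2,3) unfolding r by auto
        have "\<rho> u \<delta> < r'" using key[of \<delta>] elim(1,4) a by linarith
        then show ?case unfolding real \<rho>_def by simp
      qed
    next
      case PInf then show ?thesis by simp
    next
      case MInf then show ?thesis using z(2) by simp
    qed
  qed
qed

lemma dim_upper:
  assumes u: "continuous_on {0..1} u" and C: "0 < C"
    and ev: "\<forall>\<^sub>F \<delta> in at_right 0. NN u \<delta> \<le> C * \<delta> powr (-\<gamma>)"
  shows "upper_box_dim (graph01 u) \<le> ereal \<gamma>"
  unfolding ubd_def'
proof (subst Limsup_le_iff, intro allI impI)
  fix y assume y: "ereal \<gamma> < y"
  show "\<forall>\<^sub>F \<delta> in at_right 0. ereal (ln (NN u \<delta>) / - ln \<delta>) < y"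
  proof (cases y)
    case (real r')
    then have rr: "\<gamma> < r'" using y by auto
    have "\<forall>\<^sub>F \<delta> in at_right 0. ln C / (- ln \<delta>) < r' - \<gamma>"
      using c_div_mln[of "ln C"] rr by (simp add: order_tendstoD(2))
    then show ?thesis using ev ev01
    proof eventually_elim
      case (elim \<delta>)
      have g: "1 \<le> NN u \<delta>" using NN_ge1 u elim by auto
      have L: "0 < - ln \<delta>" using elim by simp
      have "ln (NN u \<delta>) \<le> ln (C * \<delta> powr (-\<gamma>))" using g elim C by simp
      also have "\<dots> = ln C - \<gamma> * ln \<delta>" using C elim by (simp add: ln_mult ln_powr)
      finally have "ln (NN u \<delta>) / (- ln \<delta>) \<le> (ln C - \<gamma> * ln \<delta>) / (- ln \<delta>)"
        by (rule divide_right_mono[OF _ less_imp_le[OF L]])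
      also have "\<dots> = ln C / (- ln \<delta>) + \<gamma>" using L by (simp add: field_simps)
      finally show ?case using elim real by auto
    qed
  qed (use y in auto)
qed

lemma Limsup_filter_mono: "F \<le> G \<Longrightarrow> Limsup F f \<le> Limsup G f"
  unfolding Limsup_def by (rule INF_superset_mono) (auto intro: filter_leD)

lemma dim_lower:
  assumes u: "continuous_on {0..1} u" and c: "0 < c"
    and dpos: "\<And>n. 0 < d n" and dlim: "d \<longlonglongrightarrow> 0"
    and lb: "\<And>n. c * d n powr (-\<gamma>) \<le> NN u (d n)"
  shows "ereal \<gamma> \<le> upper_box_dim (graph01 u)"
proof -
  define f where "f \<delta> = ereal (ln (NN u \<delta>) / (- ln \<delta>))" for \<delta>
  have fl: "filterlim d (at_right 0) sequentially"
    by (rule tendsto_imp_filterlim_at_right[OF dlim]) (use dpos in auto)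
  have mln: "filterlim (\<lambda>n. - ln (d n)) at_top sequentially" by (rule filterlim_compose[OF mlnat fl])
  have tl: "((\<lambda>n. \<gamma> + ln c / (- ln (d n))) \<longlongrightarrow> \<gamma>) sequentially"
    using tendsto_add[OF tendsto_const tendsto_divide_0[OF tendsto_const filterlim_at_top_imp_at_infinity[OF mln]]]
    by (simp only: add_0_right)
  have d1: "\<forall>\<^sub>F n in sequentially. d n < 1" using dlim by (simp add: order_tendstoD(2))
  have "ereal \<gamma> = Limsup sequentially (\<lambda>n. ereal (\<gamma> + ln c / (- ln (d n))))"
    by (rule lim_imp_Limsup[symmetric]) (simp, rule tendsto_ereal[OF tl])
  also have "\<dots> \<le> Limsup sequentially (\<lambda>n. f (d n))"
  proof (rule Limsup_mono)
    show "\<forall>\<^sub>F n in sequentially. ereal (\<gamma> + ln c / (- ln (d n))) \<le> f (d n)"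
      using d1
    proof eventually_elim
      case (elim n)
      have dn: "0 < d n" by (rule dpos)
      have L: "0 < - ln (d n)" using elim dn by simp
      have "0 < c * d n powr (-\<gamma>)" using c dn by simp
      then have "ln (c * d n powr (-\<gamma>)) \<le> ln (NN u (d n))" using lb[of n] by simp
      moreover have "ln (c * d n powr (-\<gamma>)) = ln c - \<gamma> * ln (d n)" using c dn by (simp add: ln_mult ln_powr)
      ultimately have "(ln c - \<gamma> * ln (d n)) / (- ln (d n)) \<le> ln (NN u (d n)) / (- ln (d n))"
        by (intro divide_right_mono[OF _ less_imp_le[OF L]]) simp
      moreover have "(ln c - \<gamma> * ln (d n)) / (- ln (d n)) = \<gamma> + ln c / (- ln (d n))"
        using L by (simp add: field_simps)
      ultimately show ?case unfolding f_def by simp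
    qed
  qed
  also have "\<dots> \<le> Limsup (filtermap d sequentially) f" by (rule Limsup_filtermap_ge)
  also have "\<dots> \<le> Limsup (at_right 0) f" by (rule Limsup_filter_mono) (use fl in \<open>simp add: filterlim_def\<close>)
  finally show ?thesis unfolding ubd_def' f_def .
qed

definition phi :: "real \<Rightarrow> real" where "phi t = \<bar>frac t - 1/2\<bar>"

lemma phi_bounds: "0 \<le> phi t" "phi t \<le> 1/2"
proof -
  have "0 \<le> frac t" "frac t < 1" by (auto simp: frac_lt_1)
  then show "0 \<le> phi t" "phi t \<le> 1/2" unfolding phi_def by (auto simp: abs_if)
qed

lemma phi_int_le: "phi x \<le> \<bar>x - real_of_int n - 1/2\<bar>"
proof -
  define m where "m = \<lfloor>x\<rfloor> - n"
  have x: "x = real_of_int \<lfloor>x\<rfloor> + frac x" by (simp add: frac_def)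
  have f: "0 \<le> frac x" "frac x < 1" by (auto simp: frac_lt_1)
  have "x - real_of_int n - 1/2 = real_of_int m + frac x - 1/2" unfolding m_def using x by simp
  then have eq: "x - real_of_int n - 1/2 = real_of_int m + frac x - 1/2" .
  have b: "\<bar>frac x - 1/2\<bar> \<le> 1/2" using f by (auto simp: abs_if)
  have "m = 0 \<or> real_of_int m \<ge> 1 \<or> real_of_int m \<le> -1" by linarith
  then show ?thesis
  proof (elim disjE)
    assume "real_of_int m \<ge> 1"
    then have "1/2 \<le> real_of_int m + frac x - 1/2" using f by linarith
    then show ?thesis unfolding phi_def eq using b abs_ge_self[of "real_of_int m + frac x - 1/2"] by linarith
  next
    assume "real_of_int m \<le> -1"
    then have "1/2 \<le> -(real_of_int m + frac x - 1/2)" using f by linarith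
    then show ?thesis unfolding phi_def eq using b abs_ge_minus_self[of "real_of_int m + frac x - 1/2"] by linarith
  qed (simp add: phi_def eq)
qed

lemma phi_floor: "phi y = \<bar>y - real_of_int \<lfloor>y\<rfloor> - 1/2\<bar>"
  unfolding phi_def frac_def by simp

lemma phi_lip: "\<bar>phi x - phi y\<bar> \<le> \<bar>x - y\<bar>"
proof -
  have "phi x \<le> \<bar>x - real_of_int \<lfloor>y\<rfloor> - 1/2\<bar>" by (rule phi_int_le)
  moreover have "phi y \<le> \<bar>y - real_of_int \<lfloor>x\<rfloor> - 1/2\<bar>" by (rule phi_int_le)
  ultimately show ?thesis unfolding phi_floor[of x] phi_floor[of y] by linarith
qed

lemma phi_on_int: assumes "t \<in> {real_of_int r .. real_of_int r + 1}" shows "phi t = \<bar>t - real_of_int r - 1/2\<bar>"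
proof (cases "t = real_of_int r + 1")
  case True
  then have "frac t = 0" by (simp add: frac_def)
  then show ?thesis unfolding phi_def using True by simp
next
  case False
  then have "\<lfloor>t\<rfloor> = r" using assms by (intro floor_unique) auto
  then show ?thesis by (simp add: phi_floor)
qed

lemma phi_intpt: "phi (real_of_int r) = 1/2" unfolding phi_def by simp

lemma phi_half: "phi (real_of_int r + 1/2) = 0"
  using phi_on_int[of "real_of_int r + 1/2" r] by simp

lemma phi_affine_half:
  assumes "t \<in> {real_of_int Q / 2 .. (real_of_int Q + 1) / 2}"
  shows "phi t = (if even Q then (real_of_int Q + 1)/2 - t else t - real_of_int Q / 2)"
proof (cases "even Q")
  case True
  then obtain r where Q: "Q = 2 * r" by (auto elim: evenE)
  have "t \<in> {real_of_int r .. real_of_int r + 1}" using assms Q by auto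
  from phi_on_int[OF this] show ?thesis using assms Q True by auto
next
  case False
  then obtain r where Q: "Q = 2 * r + 1" by (auto elim: oddE)
  have "t \<in> {real_of_int r .. real_of_int r + 1}" using assms Q by auto
  from phi_on_int[OF this] show ?thesis using assms Q False by (auto simp: field_simps)
qed

lemma phi_mid:
  assumes "a \<in> {real_of_int Q / 2 .. (real_of_int Q + 1) / 2}" "b \<in> {real_of_int Q / 2 .. (real_of_int Q + 1) / 2}"
  shows "phi ((a + b)/2) = (phi a + phi b) / 2"
proof -
  have m: "(a+b)/2 \<in> {real_of_int Q / 2 .. (real_of_int Q + 1) / 2}" using assms by auto
  show ?thesis using phi_affine_half[OF assms(1)] phi_affine_half[OF assms(2)] phi_affine_half[OF m]
    by (auto simp: field_simps)
qed

lemma phi_abs1: "\<bar>phi t\<bar> \<le> 1" using phi_bounds[of t] by simp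
lemma phi_diff1: "\<bar>phi a - phi b\<bar> \<le> 1" unfolding abs_le_iff using phi_bounds[of a] phi_bounds[of b] by linarith

definition qq :: "real \<Rightarrow> real" where "qq s = 2 powr (-s)"
definition tak :: "real \<Rightarrow> real \<Rightarrow> real" where "tak s x = (\<Sum>k. qq s ^ k * phi (2^k * x))"

lemma qq_props: assumes "0 < s" "s < 1" shows "0 < qq s" "qq s < 1" "1 < 2 * qq s"
proof -
  show "0 < qq s" unfolding qq_def by simp
  show "qq s < 1" unfolding qq_def using assms by (simp add: powr_less_one)
  have "2 * qq s = 2 powr (1 - s)" unfolding qq_def by (simp add: powr_diff powr_minus_divide)
  moreover have "1 < 2 powr (1 - s)" using assms by (simp add: gr_one_powr)
  ultimately show "1 < 2 * qq s" by simp
qed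

lemma summ_geo: assumes "0 < s" "s < 1" shows "summable (\<lambda>k. qq s ^ k)"
  using qq_props[OF assms] by (intro summable_geometric) simp

lemma summ_tak:
  assumes "0 < s" "s < 1" "\<And>k. \<bar>f k\<bar> \<le> 1"
  shows "summable (\<lambda>k. qq s ^ k * f k)"
proof (rule summable_comparison_test'[OF summ_geo[OF assms(1,2)]])
  fix k :: nat
  have "\<bar>qq s ^ k * f k\<bar> = qq s ^ k * \<bar>f k\<bar>" using qq_props[OF assms(1,2)] by (simp add: abs_mult)
  also have "\<dots> \<le> qq s ^ k * 1" using qq_props[OF assms(1,2)] assms(3)[of k] by (intro mult_left_mono) auto
  finally show "norm (qq s ^ k * f k) \<le> qq s ^ k" by simp
qed

lemma summ_phi: assumes "0 < s" "s < 1" shows "summable (\<lambda>k. qq s ^ k * phi (2^k * x))"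
  by (rule summ_tak[OF assms]) (rule phi_abs1)

lemma exN: fixes d :: real assumes "0 < d" "d \<le> 1" shows "\<exists>N. 2^N * d \<le> 1 \<and> 1 < 2^(N+1) * d"
proof -
  obtain n where n: "1/d < (2::real)^n" using real_arch_pow[of 2 "1/d"] by auto
  then have ex: "\<exists>n. 1 < (2::real)^n * d" using assms by (auto simp: field_simps)
  define M where "M = (LEAST n. 1 < (2::real)^n * d)"
  have M: "1 < (2::real)^M * d" unfolding M_def by (rule LeastI_ex[OF ex])
  have "M \<noteq> 0"
  proof
    assume "M = 0" with M assms show False by simp
  qed
  then obtain N where N: "M = N + 1" by (cases M) auto
  have "\<not> 1 < (2::real)^N * d" using not_less_Least[of N "\<lambda>n. 1 < (2::real)^n * d"] N unfolding M_def by simp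
  then show ?thesis using M N by (intro exI[of _ N]) auto
qed

definition Ct :: "real \<Rightarrow> real" where
  "Ct s = 2 powr s * (1 / (2 * qq s - 1) + 1 / (1 - qq s))"

lemma tak_holder:
  assumes s: "0 < s" "s < 1" and xy: "\<bar>x - y\<bar> \<le> 1"
  shows "\<bar>tak s x - tak s y\<bar> \<le> Ct s * \<bar>x - y\<bar> powr s"
proof (cases "x = y")
  case True then show ?thesis by simp
next
  case False
  define d where "d = \<bar>x - y\<bar>"
  have d: "0 < d" "d \<le> 1" using False xy unfolding d_def by auto
  define q where "q = qq s"
  note qp = qq_props[OF s, folded q_def]
  define a where "a k = q ^ k * (phi (2^k * x) - phi (2^k * y))" for k :: nat
  define b where "b k = q ^ k * min (2^k * d) 1" for k :: nat
  have sa: "summable a" unfolding a_def q_def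
    by (rule summ_tak[OF s]) (rule phi_diff1)
  have ab: "\<bar>a k\<bar> \<le> b k" for k
  proof -
    have "\<bar>phi (2^k * x) - phi (2^k * y)\<bar> \<le> \<bar>2^k * x - 2^k * y\<bar>" by (rule phi_lip)
    also have "\<dots> = 2^k * d" unfolding d_def by (simp add: abs_mult right_diff_distrib[symmetric])
    finally have "\<bar>phi (2^k * x) - phi (2^k * y)\<bar> \<le> min (2^k * d) 1"
      using phi_bounds[of "2^k*x"] phi_bounds[of "2^k*y"] by auto
    then show ?thesis unfolding a_def b_def using qp by (simp add: abs_mult mult_left_mono)
  qed
  have b0: "0 \<le> b k" for k unfolding b_def using qp d by simp
  have sb: "summable b" unfolding b_def q_def
    by (rule summ_tak[OF s]) (use d in auto)
  have "tak s x - tak s y = suminf a"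
    unfolding tak_def a_def q_def using summ_phi[OF s, of x] summ_phi[OF s, of y]
    by (simp add: suminf_diff[symmetric] right_diff_distrib)
  have sabs: "summable (\<lambda>k. \<bar>a k\<bar>)"
    by (rule summable_comparison_test'[OF sb, where N=0]) (use ab in auto)
  have "\<bar>tak s x - tak s y\<bar> \<le> suminf (\<lambda>k. \<bar>a k\<bar>)"
    using summable_norm[of a] sabs \<open>tak s x - tak s y = suminf a\<close> by auto
  also have "\<dots> \<le> suminf b"
    by (rule suminf_le[OF ab sabs sb])
  finally have tb: "\<bar>tak s x - tak s y\<bar> \<le> suminf b" .
  obtain N where N: "2^N * d \<le> 1" "1 < 2^(N+1) * d" using exN[OF d] by blast
  have P1: "suminf b = (\<Sum>k. b (k + N)) + (\<Sum>k<N. b k)" by (rule suminf_split_initial_segment[OF sb])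
  have "(\<Sum>k<N. b k) \<le> (\<Sum>k<N. (2*q)^k * d)"
    unfolding b_def by (intro sum_mono) (use qp in \<open>auto simp: power_mult_distrib\<close>)
  also have "(\<Sum>k<N. (2*q)^k * d) = d * (((2*q)^N - 1) / (2*q - 1))"
  proof -
    have g: "(\<Sum>k<N. (2*q)^k) = (1 - (2*q)^N)/(1 - 2*q)" using qp sum_gp_strict[of "2*q" N] by auto
    have "(\<Sum>k<N. (2*q)^k * d) = (\<Sum>k<N. (2*q)^k) * d" by (simp add: sum_distrib_right)
    also have "\<dots> = (1 - (2*q)^N)/(1 - 2*q) * d" by (simp only: g)
    also have "\<dots> = d * (((2*q)^N - 1)/(2*q - 1))"
    proof -
      have "1 - 2*q \<noteq> 0" "2*q - 1 \<noteq> 0" using qp by auto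
      then show ?thesis by (simp add: field_simps)
    qed
    finally show ?thesis .
  qed
  also have "\<dots> \<le> d * (2*q)^N / (2*q - 1)"
    using qp d by (simp add: field_simps)
  also have "\<dots> \<le> q^N / (2*q - 1)"
  proof (rule divide_right_mono)
    have "d * (2*q)^N = (2^N * d) * q^N" by (simp add: power_mult_distrib)
    also have "\<dots> \<le> q^N" using N(1) qp d by (simp add: mult_left_le_one_le)
    finally show "d * (2*q)^N \<le> q^N" .
  qed (use qp in simp)
  finally have P2: "(\<Sum>k<N. b k) \<le> q^N / (2*q - 1)" .
  have "(\<Sum>k. b (k + N)) \<le> (\<Sum>k. q^N * q^k)"
  proof (rule suminf_le)
    show "b (k + N) \<le> q^N * q^k" for k unfolding b_def using qp by (simp add: power_add mult_left_le)
    show "summable (\<lambda>k. b (k + N))" using sb by (simp add: summable_iff_shift)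
    show "summable (\<lambda>k. q^N * q^k)" using summ_geo[OF s] unfolding q_def by (rule summable_mult)
  qed
  also have "(\<Sum>k. q^N * q^k) = q^N / (1 - q)"
    using qp by (simp add: suminf_mult suminf_geometric)
  finally have P3: "(\<Sum>k. b (k + N)) \<le> q^N / (1 - q)" .
  have "\<bar>tak s x - tak s y\<bar> \<le> q^N / (1 - q) + q^N / (2*q - 1)" using tb P1 P2 P3 by linarith
  also have "\<dots> = q^N * (1 / (2*q - 1) + 1 / (1 - q))" by (simp add: field_simps)
  also have "\<dots> \<le> (2 powr s * d powr s) * (1 / (2*q - 1) + 1 / (1 - q))"
  proof (rule mult_right_mono)
    show "0 \<le> 1 / (2*q - 1) + 1 / (1 - q)" using qp by simp
    have "q^N = (1/2^N) powr s" unfolding q_def qq_def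
      by (simp add: powr_power powr_divide powr_realpow[symmetric] powr_powr powr_minus_divide mult.commute)
    also have "\<dots> \<le> (2 * d) powr s"
    proof (rule powr_mono2)
      show "1/2^N \<le> 2*d" using N(2) by (simp add: field_simps)
    qed (use s in auto)
    also have "\<dots> = 2 powr s * d powr s" using d by (simp add: powr_mult)
    finally show "q^N \<le> 2 powr s * d powr s" .
  qed
  also have "\<dots> = Ct s * \<bar>x - y\<bar> powr s" unfolding Ct_def q_def d_def by simp
  finally show ?thesis .
qed

lemma tak_isCont: assumes s: "0 < s" "s < 1" shows "isCont (tak s) x"
proof -
  have ev: "\<forall>\<^sub>F y in at x. norm (tak s y - tak s x) \<le> Ct s * \<bar>y - x\<bar> powr s"
  proof -
    have "\<forall>\<^sub>F y in at x. dist y x < 1" unfolding eventually_at by (intro exI[of _ 1]) auto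
    then show ?thesis
    proof eventually_elim
      case (elim y)
      then have "\<bar>y - x\<bar> \<le> 1" by (simp add: dist_real_def)
      then show ?case using tak_holder[OF s] by simp
    qed
  qed
  have l0: "((\<lambda>y. \<bar>y - x\<bar>) \<longlongrightarrow> 0) (at x)"
    using tendsto_rabs_zero[OF LIM_zero[OF tendsto_ident_at[of x UNIV]]] by simp
  have "((\<lambda>y. \<bar>y - x\<bar> powr s) \<longlongrightarrow> 0) (at x)"
    by (rule tendsto_zero_powrI[OF l0 tendsto_const]) (use s in auto)
  then have "((\<lambda>y. Ct s * \<bar>y - x\<bar> powr s) \<longlongrightarrow> Ct s * 0) (at x)" by (intro tendsto_mult tendsto_const)
  then have "((\<lambda>y. Ct s * \<bar>y - x\<bar> powr s) \<longlongrightarrow> 0) (at x)" by simp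
  from Lim_null_comparison[OF ev this] have "((\<lambda>y. tak s y - tak s x) \<longlongrightarrow> 0) (at x)" .
  then have "(tak s \<longlongrightarrow> tak s x) (at x)" by (rule LIM_zero_cancel)
  then show ?thesis unfolding isCont_def .
qed

lemma tak_cont: assumes "0 < s" "s < 1" shows "continuous_on A (tak s)"
  by (intro continuous_at_imp_continuous_on ballI tak_isCont[OF assms])

lemma phi_nat: "phi (real N) = 1/2" using phi_intpt[of "int N"] by simp

lemma sd_term:
  fixes j n k :: nat
  shows "phi (2^k * (real j / 2^n)) + phi (2^k * ((real j + 1) / 2^n)) - 2 * phi (2^k * ((2 * real j + 1) / 2^(n+1)))
     = (if k = n then 1 else 0)"
proof -
  consider "n < k" | "k = n" | "k < n" by linarith
  then show ?thesis
  proof cases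
    case 1
    then obtain e where e: "k = n + 1 + e" by (metis add.commute less_iff_Suc_add add_Suc_right Suc_eq_plus1 add.assoc)
    have a: "2^k * (real j / 2^n) = real (j * 2^(e+1))" unfolding e by (simp add: power_add field_simps)
    have b: "2^k * ((real j + 1) / 2^n) = real ((j+1) * 2^(e+1))" unfolding e by (simp add: power_add field_simps)
    have m: "2^k * ((2 * real j + 1) / 2^(n+1)) = real ((2*j+1) * 2^e)" unfolding e by (simp add: power_add field_simps)
    show ?thesis unfolding a b m phi_nat using 1 by simp
  next
    case 2
    have a: "2^k * (real j / 2^n) = real j" unfolding 2 by simp
    have b: "2^k * ((real j + 1) / 2^n) = real (j+1)" unfolding 2 by simp
    have m: "2^k * ((2 * real j + 1) / 2^(n+1)) = real_of_int (int j) + 1/2" unfolding 2 by (simp add: field_simps)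
    show ?thesis unfolding a b m phi_nat phi_half using 2 by simp
  next
    case 3
    then obtain p where p: "n = k + p + 1" by (metis add.commute less_iff_Suc_add add_Suc_right Suc_eq_plus1 add.assoc)
    define Q where "Q = j div 2^p"
    define r where "r = j mod 2^p"
    have jQ: "j = Q * 2^p + r" unfolding Q_def r_def by (metis div_mult_mod_eq)
    have r: "r + 1 \<le> 2^p" unfolding r_def by (simp add: Suc_le_eq)
    have a: "2^k * (real j / 2^n) = real j / 2^(p+1)" unfolding p by (simp add: power_add field_simps)
    have b: "2^k * ((real j + 1) / 2^n) = (real j + 1) / 2^(p+1)" unfolding p by (simp add: power_add field_simps)
    have m: "2^k * ((2 * real j + 1) / 2^(n+1)) = (real j / 2^(p+1) + (real j + 1) / 2^(p+1)) / 2"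
      unfolding p by (simp add: power_add field_simps)
    have rj: "real j = real Q * 2^p + real r" unfolding jQ by simp
    have rr: "real r + 1 \<le> 2^p" using r by (metis of_nat_1 of_nat_add of_nat_le_iff of_nat_numeral of_nat_power)
    have e1: "real j / 2^(p+1) = real Q / 2 + real r / 2^(p+1)" unfolding rj by (simp add: field_simps)
    have e2: "(real j + 1) / 2^(p+1) = real Q / 2 + (real r + 1) / 2^(p+1)" unfolding rj by (simp add: field_simps)
    have f1: "(real r + 1) / 2^(p+1) \<le> 1/2" using rr by (simp add: field_simps)
    have f0: "0 \<le> real r / 2^(p+1)" by simp
    have f2: "real r / 2^(p+1) \<le> (real r + 1) / 2^(p+1)" by (simp add: divide_right_mono)
    have g: "(real_of_int (int Q) + 1)/2 = real Q/2 + 1/2" "real_of_int (int Q)/2 = real Q/2" by simp_all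
    have ina: "real j / 2^(p+1) \<in> {real_of_int (int Q) / 2 .. (real_of_int (int Q) + 1) / 2}"
      unfolding atLeastAtMost_iff e1 g using f0 f1 f2 by linarith
    have inb: "(real j + 1) / 2^(p+1) \<in> {real_of_int (int Q) / 2 .. (real_of_int (int Q) + 1) / 2}"
      unfolding atLeastAtMost_iff e2 g using f0 f1 f2 by linarith
    show ?thesis unfolding a b m phi_mid[OF ina inb] using 3 by simp
  qed
qed

lemma tak_sd:
  fixes j n :: nat
  assumes s: "0 < s" "s < 1"
  shows "tak s (real j / 2^n) + tak s ((real j + 1) / 2^n) - 2 * tak s ((2 * real j + 1) / 2^(n+1)) = qq s ^ n"
proof -
  define a b m where "a = real j / 2^n" and "b = (real j + 1) / 2^n" and "m = (2 * real j + 1) / 2^(n+1)"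
  have "(\<lambda>k. qq s ^ k * phi (2^k * a) + qq s ^ k * phi (2^k * b) - 2 * (qq s ^ k * phi (2^k * m)))
        sums (tak s a + tak s b - 2 * tak s m)"
    unfolding tak_def
    by (intro sums_diff sums_add sums_mult summable_sums summ_phi[OF s])
  moreover have "(\<lambda>k. qq s ^ k * phi (2^k * a) + qq s ^ k * phi (2^k * b) - 2 * (qq s ^ k * phi (2^k * m)))
        = (\<lambda>k. if k = n then qq s ^ k else 0)"
  proof
    fix k
    have "qq s ^ k * phi (2^k * a) + qq s ^ k * phi (2^k * b) - 2 * (qq s ^ k * phi (2^k * m))
       = qq s ^ k * (phi (2^k * a) + phi (2^k * b) - 2 * phi (2^k * m))" by (simp add: algebra_simps)
    also have "\<dots> = qq s ^ k * (if k = n then 1 else 0)" unfolding a_def b_def m_def sd_term ..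
    finally show "qq s ^ k * phi (2^k * a) + qq s ^ k * phi (2^k * b) - 2 * (qq s ^ k * phi (2^k * m))
        = (if k = n then qq s ^ k else 0)" by simp
  qed
  ultimately have "(\<lambda>k. if k = n then qq s ^ k else 0) sums (tak s a + tak s b - 2 * tak s m)" by simp
  moreover have "(\<lambda>k. if k = n then qq s ^ k else 0) sums (qq s ^ n)" by (rule sums_single)
  ultimately show ?thesis unfolding a_def b_def m_def by (rule sums_unique2)
qed

lemma dim_ge1:
  assumes u: "continuous_on {0..1} u"
  shows "ereal 1 \<le> upper_box_dim (graph01 u)"
proof (rule dim_lower[OF u, of "1/2" "\<lambda>n. inverse (real (Suc n))"])
  show "(\<lambda>n. inverse (real (Suc n))) \<longlonglongrightarrow> 0" by (rule LIMSEQ_inverse_real_of_nat)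
  fix n :: nat
  define d where "d = inverse (real (Suc n))"
  have d: "0 < d" unfolding d_def by simp
  have "1 \<le> 4 * (d/2) * NN u (2*(d/2))" by (rule N_props(2)[OF u]) (use d in simp)
  then have "1 \<le> 2 * d * NN u d" by simp
  then have "1/2 * (1/d) \<le> NN u d" using d by (simp add: field_simps)
  moreover have "d powr (-1) = 1/d" using d by (simp add: powr_minus_divide)
  ultimately show "1/2 * d powr (-1) \<le> NN u d" by simp
qed auto

lemma dim_holder:
  assumes u: "continuous_on {0..1} u" and s: "0 \<le> s" "s \<le> 1" and C: "0 \<le> C"
    and hol: "\<And>x y. x \<in> {0..1} \<Longrightarrow> y \<in> {0..1} \<Longrightarrow> \<bar>u x - u y\<bar> \<le> C * \<bar>x - y\<bar> powr s"
  shows "upper_box_dim (graph01 u) \<le> ereal (2 - s)"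
proof (rule dim_upper[OF u, of "16 * (C + 1)"])
  show "0 < 16 * (C + 1)" using C by simp
  show "\<forall>\<^sub>F \<delta> in at_right 0. NN u \<delta> \<le> 16 * (C + 1) * \<delta> powr - (2 - s)"
    using ev01
  proof eventually_elim
    case (elim \<delta>)
    define w where "w = \<delta>/2"
    have w: "0 < w" "w \<le> 1" using elim unfolding w_def by auto
    have col: "diameter (u ` col w i) \<le> C * w powr s" for i
    proof (rule diameter_le)
      show "u ` col w i \<noteq> {} \<or> 0 \<le> C * w powr s" using C by simp
      fix a b assume "a \<in> u ` col w i" "b \<in> u ` col w i"
      then obtain x y where xy: "x \<in> col w i" "y \<in> col w i" "a = u x" "b = u y" by auto
      have "\<bar>x - y\<bar> \<le> w" using xy(1,2) unfolding col_def by (auto simp: algebra_simps abs_le_iff)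
      then have "\<bar>x - y\<bar> powr s \<le> w powr s" by (intro powr_mono2) (use s in auto)
      moreover have "\<bar>u x - u y\<bar> \<le> C * \<bar>x - y\<bar> powr s" using hol xy col_sub by blast
      ultimately show "norm (a - b) \<le> C * w powr s" using xy C by (simp add: order_trans mult_left_mono)
    qed
    have os: "osum u w \<le> ncol w * (C * w powr s)"
      unfolding osum_def using sum_mono[of "{..<ncol w}" "\<lambda>i. diameter (u ` col w i)" "\<lambda>i. C * w powr s"] col by simp
    have wp: "1 \<le> w powr (s - 1)"
    proof -
      have "w powr (1 - s) \<le> 1" using w s by (intro powr_le1) auto
      moreover have "w powr (s - 1) = 1 / w powr (1 - s)" by (simp add: powr_minus_divide[symmetric])
      moreover have "0 < w powr (1 - s)" using w by simp
      ultimately show ?thesis by simp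
    qed
    have nc: "real (ncol w) \<le> 2 / w" using ncol_le[OF w(1)] w by (simp add: field_simps)
    define Y where "Y = w powr (s - 1)"
    have Y0: "0 \<le> Y" unfolding Y_def by simp
    have wY: "w powr s / w = Y" unfolding Y_def using w by (simp add: powr_diff)
    have e2: "Y / w = 2 powr (2 - s) * \<delta> powr (s - 2)"
    proof -
      have "w powr (s - 2) = w powr ((s - 1) - 1)" by simp
      also have "\<dots> = w powr (s - 1) / w powr 1" by (rule powr_diff)
      also have "\<dots> = Y / w" unfolding Y_def using w by simp
      finally have "Y / w = w powr (s - 2)" by simp
      also have "\<dots> = 2 powr (2 - s) * \<delta> powr (s - 2)"
        unfolding w_def using elim by (simp add: powr_divide powr_diff powr_minus_divide)
      finally show ?thesis .
    qed
    have p4: "2 powr (2 - s) \<le> 4"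
    proof -
      have "2 powr (2 - s) \<le> 2 powr 2" using s by (intro powr_mono) auto
      then show ?thesis by simp
    qed
    have "NN u \<delta> = NN u (2*w)" unfolding w_def by simp
    also have "\<dots> \<le> 2 * osum u w / w + 2 * ncol w" by (rule N_props(3)[OF u w(1)])
    also have "\<dots> \<le> 2 * (ncol w * (C * w powr s)) / w + 2 * ncol w" using os w by (simp add: divide_right_mono)
    also have "\<dots> = 2 * ncol w * (C * (w powr s / w) + 1)" using w by (simp add: field_simps)
    also have "\<dots> = 2 * ncol w * (C * Y + 1)" unfolding wY ..
    also have "\<dots> \<le> 2 * (2/w) * (C * Y + 1)"
      using nc C Y0 by (intro mult_right_mono mult_left_mono) auto
    also have "\<dots> \<le> 2 * (2/w) * ((C + 1) * Y)"
      using wp C w unfolding Y_def by (intro mult_left_mono) (auto simp: algebra_simps)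
    also have "\<dots> = 4 * (C + 1) * (Y / w)" by (simp add: field_simps)
    also have "\<dots> = 4 * (C + 1) * (2 powr (2 - s) * \<delta> powr (s - 2))" unfolding e2 ..
    also have "\<dots> \<le> 4 * (C + 1) * (4 * \<delta> powr (s - 2))"
      using C elim p4 by (intro mult_left_mono mult_right_mono) auto
    also have "\<dots> = 16 * (C + 1) * \<delta> powr - (2 - s)" by simp
    finally show ?case .
  qed
qed

lemma tak_nonneg: assumes s: "0 < s" "s < 1" shows "0 \<le> tak s x"
  unfolding tak_def by (rule suminf_nonneg[OF summ_phi[OF s]]) (use qq_props[OF s] phi_bounds in simp)

lemma Ct_nonneg: assumes s: "0 < s" "s < 1" shows "0 \<le> Ct s"
  unfolding Ct_def using qq_props[OF s] by simp

lemma tak_osum_lower: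
  fixes n :: nat
  assumes s: "0 < s" "s < 1"
  defines "h \<equiv> \<lambda>x. 1 + tak s x"
  shows "2^n * qq s ^ n / 2 \<le> osum h (1/2^n)"
proof -
  define w :: real where "w = 1/2^n"
  have w: "0 < w" unfolding w_def by simp
  have hc: "continuous_on {0..1} h" unfolding h_def by (intro continuous_intros tak_cont[OF s])
  have dcol: "qq s ^ n / 2 \<le> diameter (h ` col w i)" if i: "i < 2^n" for i
  proof -
    define a b m where "a = real i / 2^n" and "b = (real i + 1) / 2^n" and "m = (2 * real i + 1) / 2^(n+1)"
    have i1: "real i + 1 \<le> 2^n" using i by (metis Suc_le_eq of_nat_Suc of_nat_le_iff of_nat_numeral of_nat_power add.commute)
    have ab: "a \<le> b" "a \<le> m" "m \<le> b" "0 \<le> a" "b \<le> 1" unfolding a_def b_def m_def using i1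
      by (auto simp: field_simps)
    have cw: "col w i = {a .. b} \<inter> {0..1}" unfolding col_def w_def a_def b_def by (simp add: field_simps)
    have inn: "a \<in> col w i" "b \<in> col w i" "m \<in> col w i" unfolding cw using ab by auto
    have sd: "h a + h b - 2 * h m = qq s ^ n" unfolding h_def a_def b_def m_def using tak_sd[OF s, of i n] by simp
    have d1: "\<bar>h a - h m\<bar> \<le> diameter (h ` col w i)"
      using diameter_bounded_bound[OF bounded_img[OF hc], of "h a" w i "h m"] inn by (simp add: dist_real_def)
    have d2: "\<bar>h b - h m\<bar> \<le> diameter (h ` col w i)"
      using diameter_bounded_bound[OF bounded_img[OF hc], of "h b" w i "h m"] inn by (simp add: dist_real_def)
    have "qq s ^ n \<le> \<bar>h a - h m\<bar> + \<bar>h b - h m\<bar>" using sd by linarith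
    then show ?thesis using d1 d2 by linarith
  qed
  have sub1: "i < ncol w" if i: "i < (2::nat)^n" for i :: nat
  proof -
    have "real i \<le> 2^n" using i by (metis less_imp_le of_nat_le_iff of_nat_numeral of_nat_power)
    then have "int i \<le> \<lfloor>1/w\<rfloor>" unfolding w_def by (simp add: le_floor_iff)
    then have "i \<le> nat \<lfloor>1/w\<rfloor>" by (metis le_nat_iff of_nat_0_le_iff order_trans)
    then show ?thesis unfolding ncol_def by simp
  qed
  have sub: "{..<(2::nat)^n} \<subseteq> {..<ncol w}"
  proof (rule subsetI)
    fix i assume "i \<in> {..<(2::nat)^n}"
    then show "i \<in> {..<ncol w}" using sub1[of i] by simp
  qed
  have "2^n * qq s ^ n / 2 = (\<Sum>i<(2::nat)^n. qq s ^ n / 2)" by simp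
  also have "\<dots> \<le> (\<Sum>i<(2::nat)^n. diameter (h ` col w i))" by (intro sum_mono dcol) auto
  also have "\<dots> \<le> (\<Sum>i<ncol w. diameter (h ` col w i))"
    by (rule sum_mono2) (use sub diameter_ge_0[OF bounded_img[OF hc]] in auto)
  finally show ?thesis unfolding osum_def w_def .
qed

lemma tak_dim:
  assumes s: "0 < s" "s < 1"
  shows "upper_box_dim (graph01 (\<lambda>x. 1 + tak s x)) = ereal (2 - s)"
proof (rule antisym)
  define h where "h = (\<lambda>x. 1 + tak s x)"
  have hc: "continuous_on {0..1} h" unfolding h_def by (intro continuous_intros tak_cont[OF s])
  show "upper_box_dim (graph01 (\<lambda>x. 1 + tak s x)) \<le> ereal (2 - s)"
  proof (rule dim_holder[OF hc[unfolded h_def] _ _ Ct_nonneg[OF s]])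
    fix x y :: real assume "x \<in> {0..1}" "y \<in> {0..1}"
    then have "\<bar>x - y\<bar> \<le> 1" by auto
    then show "\<bar>1 + tak s x - (1 + tak s y)\<bar> \<le> Ct s * \<bar>x - y\<bar> powr s" using tak_holder[OF s] by simp
  qed (use s in auto)
  show "ereal (2 - s) \<le> upper_box_dim (graph01 (\<lambda>x. 1 + tak s x))"
  proof (rule dim_lower[OF hc[unfolded h_def], of "1/48" "\<lambda>n. 2 / 2^n"])
    show "(\<lambda>n. 2 / 2 ^ n :: real) \<longlonglongrightarrow> 0"
      by (rule tendsto_divide_0[OF tendsto_const]) (rule filterlim_realpow_sequentially_gt1, simp)
    fix n :: nat
    define P :: real where "P = 2^n"
    have P: "1 \<le> P" unfolding P_def by simp
    define q where "q = qq s"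
    have lo: "P * q ^ n / 2 \<le> osum h (1/P)" using tak_osum_lower[OF s, of n] unfolding P_def q_def h_def .
    have np: "osum h (1/P) \<le> 24 * (1/P) * NN h (2*(1/P))" by (rule N_props(1)[OF hc]) (use P in simp)
    have N1: "P * P * q ^ n / 48 \<le> NN h (2/P)"
    proof -
      have "P * q ^ n / 2 \<le> 24 * (1/P) * NN h (2/P)" using lo np by simp
      then have "P * (P * q ^ n / 2) \<le> P * (24 * (1/P) * NN h (2/P))" using P by (intro mult_left_mono) auto
      then show ?thesis using P by (simp add: field_simps)
    qed
    have qn: "q ^ n = 1 / P powr s"
    proof -
      have "q ^ n = 2 powr (real n * - s)" unfolding q_def qq_def by (rule powr_power) simp
      also have "\<dots> = 1 / 2 powr (real n * s)" by (simp add: powr_minus_divide)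
      also have "2 powr (real n * s) = P powr s" unfolding P_def
        by (simp add: powr_realpow[symmetric] powr_powr)
      finally show ?thesis .
    qed
    have "(2/P) powr (-(2 - s)) = 1 / (2/P) powr (2 - s)" by (rule powr_minus_divide)
    also have "\<dots> = (P/2) powr (2 - s)" using P by (simp add: powr_divide)
    also have "\<dots> \<le> P powr (2 - s)" using P s by (intro powr_mono2) auto
    also have "\<dots> = P powr 2 / P powr s" by (rule powr_diff)
    also have "\<dots> = P * P * q ^ n" using P unfolding qn by (simp add: power2_eq_square)
    finally have "(2/P) powr (-(2 - s)) \<le> P * P * q ^ n" .
    then show "1/48 * (2 / 2^n) powr (-(2 - s)) \<le> NN (\<lambda>x. 1 + tak s x) (2 / 2^n)"
      using N1 unfolding P_def h_def by simp
  qed auto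
qed

lemma bound_cont:
  fixes u :: "real \<Rightarrow> real"
  assumes "continuous_on {0..1} u" obtains M where "0 \<le> M" "\<And>x. x \<in> {0..1} \<Longrightarrow> \<bar>u x\<bar> \<le> M"
proof -
  have "bounded (u ` {0..1})" by (rule compact_imp_bounded[OF compact_continuous_image[OF assms]]) simp
  then obtain M where M: "\<forall>y\<in>u ` {0..1}. norm y \<le> M" unfolding bounded_iff by blast
  then have "0 \<le> M" by (metis atLeastAtMost_iff image_eqI norm_ge_zero order_trans zero_le_one order_refl)
  then show ?thesis using that M by auto
qed

lemma quot_bound:
  fixes fx fy hx hy M :: real
  assumes "1 \<le> hx" "1 \<le> hy" "\<bar>fy\<bar> \<le> M"
  shows "\<bar>fx / hx - fy / hy\<bar> \<le> \<bar>fx - fy\<bar> + M * \<bar>hx - hy\<bar>"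
proof -
  have e: "fx / hx - fy / hy = (fx - fy) / hx + fy * (hy - hx) / (hx * hy)"
    using assms by (simp add: field_simps)
  have hh: "1 \<le> hx * hy" using mult_mono[of 1 hx 1 hy] assms by simp
  have "\<bar>(fx - fy) / hx\<bar> = \<bar>fx - fy\<bar> / hx" using assms by simp
  also have "\<dots> \<le> \<bar>fx - fy\<bar> / 1" by (rule divide_left_mono) (use assms in auto)
  finally have a: "\<bar>(fx - fy) / hx\<bar> \<le> \<bar>fx - fy\<bar>" by simp
  have "\<bar>fy * (hy - hx) / (hx * hy)\<bar> = \<bar>fy\<bar> * \<bar>hx - hy\<bar> / (hx * hy)"
    using assms by (simp add: abs_mult abs_minus_commute)
  also have "\<dots> \<le> \<bar>fy\<bar> * \<bar>hx - hy\<bar> / 1" by (rule divide_left_mono) (use hh in auto)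
  also have "\<dots> \<le> M * \<bar>hx - hy\<bar>" using assms by (simp add: mult_right_mono)
  finally have b: "\<bar>fy * (hy - hx) / (hx * hy)\<bar> \<le> M * \<bar>hx - hy\<bar>" .
  show ?thesis unfolding e using a b abs_triangle_ineq[of "(fx - fy) / hx" "fy * (hy - hx) / (hx * hy)"] by linarith
qed

lemma prod_bound:
  fixes gx gy hx hy G H :: real
  assumes "\<bar>hx\<bar> \<le> H" "\<bar>gy\<bar> \<le> G"
  shows "\<bar>gx * hx - gy * hy\<bar> \<le> H * \<bar>gx - gy\<bar> + G * \<bar>hx - hy\<bar>"
proof -
  have "gx * hx - gy * hy = hx * (gx - gy) + gy * (hx - hy)" by (simp add: algebra_simps)
  then have "\<bar>gx * hx - gy * hy\<bar> \<le> \<bar>hx\<bar> * \<bar>gx - gy\<bar> + \<bar>gy\<bar> * \<bar>hx - hy\<bar>"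
    by (metis abs_mult abs_triangle_ineq)
  also have "\<dots> \<le> H * \<bar>gx - gy\<bar> + G * \<bar>hx - hy\<bar>"
    using assms by (intro add_mono mult_right_mono) auto
  finally show ?thesis .
qed

lemma exists_h:
  assumes "1 \<le> \<beta>" "\<beta> < 2"
  shows "\<exists>h. continuous_on {0..1} h \<and> (\<forall>x. 1 \<le> h x) \<and> upper_box_dim (graph01 h) = ereal \<beta>"
proof (cases "\<beta> = 1")
  case True
  have c: "continuous_on {0..1} (\<lambda>x::real. 1::real)" by simp
  have "upper_box_dim (graph01 (\<lambda>x::real. 1::real)) \<le> ereal (2 - 1)"
    by (rule dim_holder[OF c, of 1 0]) auto
  moreover have "ereal 1 \<le> upper_box_dim (graph01 (\<lambda>x::real. 1::real))" by (rule dim_ge1[OF c])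
  ultimately show ?thesis using True c by (intro exI[of _ "\<lambda>x. 1"]) auto
next
  case False
  define s where "s = 2 - \<beta>"
  have s: "0 < s" "s < 1" using assms False unfolding s_def by auto
  have "continuous_on {0..1} (\<lambda>x. 1 + tak s x)" by (intro continuous_intros tak_cont[OF s])
  moreover have "\<forall>x. 1 \<le> 1 + tak s x" using tak_nonneg[OF s] by simp
  moreover have "upper_box_dim (graph01 (\<lambda>x. 1 + tak s x)) = ereal \<beta>" using tak_dim[OF s] unfolding s_def by simp
  ultimately show ?thesis by blast
qed

theorem theorem3p10:
  fixes f :: "real \<Rightarrow> real" and \<alpha> :: ereal and \<beta> :: real
  assumes "continuous_on {0..1} f"
    and "\<forall>x\<in>{0..1}. f x \<noteq> 0"
    and "\<alpha> = upper_box_dim (graph01 f)"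
    and "1 \<le> \<beta>" and "ereal \<beta> < \<alpha>"
  shows "\<exists>g h :: real \<Rightarrow> real. continuous_on {0..1} g \<and> continuous_on {0..1} h \<and>
           (\<forall>x\<in>{0..1}. f x = g x * h x) \<and>
           upper_box_dim (graph01 g) = \<alpha> \<and> upper_box_dim (graph01 h) = ereal \<beta>"
proof -
  note fc = assms(1)
  obtain M where M: "0 \<le> M" "\<And>x. x \<in> {0..1} \<Longrightarrow> \<bar>f x\<bar> \<le> M" using bound_cont[OF fc] by blast
  have "\<alpha> \<le> ereal (2 - 0)" unfolding assms(3)
  proof (rule dim_holder[OF fc, of 0 "2*M"])
    fix x y :: real assume xy: "x \<in> {0..1}" "y \<in> {0..1}"
    show "\<bar>f x - f y\<bar> \<le> 2 * M * \<bar>x - y\<bar> powr 0"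
    proof (cases "x = y")
      case False
      then have "\<bar>x - y\<bar> powr 0 = 1" by simp
      moreover have "\<bar>f x - f y\<bar> \<le> 2 * M" using M(2)[OF xy(1)] M(2)[OF xy(2)] by linarith
      ultimately show ?thesis by simp
    qed simp
  qed (use M in auto)
  from order.strict_trans2[OF assms(5) this] have b2: "\<beta> < 2" by simp
  obtain h where h: "continuous_on {0..1} h" "\<And>x. 1 \<le> h x" "upper_box_dim (graph01 h) = ereal \<beta>"
    using exists_h[OF assms(4) b2] by blast
  define g where "g = (\<lambda>x. f x / h x)"
  have hne: "\<And>x. h x \<noteq> 0" using h(2) by (metis not_one_le_zero)
  have gc: "continuous_on {0..1} g" unfolding g_def using fc h(1) hne by (intro continuous_on_divide) auto
  have fgh: "\<forall>x\<in>{0..1}. f x = g x * h x" unfolding g_def using hne by simp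
  obtain G where G: "0 \<le> G" "\<And>x. x \<in> {0..1} \<Longrightarrow> \<bar>g x\<bar> \<le> G" using bound_cont[OF gc] by blast
  obtain H where H: "0 \<le> H" "\<And>x. x \<in> {0..1} \<Longrightarrow> \<bar>h x\<bar> \<le> H" using bound_cont[OF h(1)] by blast
  have d1: "upper_box_dim (graph01 g) \<le> max \<alpha> (ereal \<beta>)"
    unfolding assms(3) h(3)[symmetric]
  proof (rule dim_le_max[OF gc fc h(1), of 1 M])
    fix x y :: real assume xy: "x \<in> {0..1}" "y \<in> {0..1}"
    show "\<bar>g x - g y\<bar> \<le> 1 * \<bar>f x - f y\<bar> + M * \<bar>h x - h y\<bar>"
      unfolding g_def using quot_bound[OF h(2) h(2) M(2)[OF xy(2)]] by simp
  qed (use M in auto)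
  have d2: "\<alpha> \<le> max (upper_box_dim (graph01 g)) (ereal \<beta>)"
    unfolding assms(3) h(3)[symmetric]
  proof (rule dim_le_max[OF fc gc h(1), of H G])
    fix x y :: real assume xy: "x \<in> {0..1}" "y \<in> {0..1}"
    show "\<bar>f x - f y\<bar> \<le> H * \<bar>g x - g y\<bar> + G * \<bar>h x - h y\<bar>"
      using fgh xy prod_bound[OF H(2)[OF xy(1)] G(2)[OF xy(2)], of "g x" "h y"] by simp
  qed (use G H in auto)
  have "max \<alpha> (ereal \<beta>) = \<alpha>" using assms(5) by simp
  then have "upper_box_dim (graph01 g) \<le> \<alpha>" using d1 by simp
  moreover have "\<alpha> \<le> upper_box_dim (graph01 g)"
  proof (rule ccontr)
    assume "\<not> \<alpha> \<le> upper_box_dim (graph01 g)"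
    then have "max (upper_box_dim (graph01 g)) (ereal \<beta>) < \<alpha>" using assms(5) by simp
    then show False using leD[OF d2] by blast
  qed
  ultimately have "upper_box_dim (graph01 g) = \<alpha>" by simp
  then show ?thesis using gc h(1) h(3) fgh by blast
qed

end
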